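(* Let $$C= \begin{pmatrix} -1& 2& 2\\ -2&1& 2\\ -2&2& 3 \end{pmatrix}.$$ For every positive integer $n$, writing $C^n(3,4,5)^\top=(x,y,z)^\top$, the circumradius of the triangle with side lengths $x,y,z$ is $R_n=2n^2+4n+\frac52$.
   Context: Triples are regarded as row vectors and $\top$ denotes transpose. The triple $C^n(3,4,5)^\top$ is a primitive Pythagorean triple (positive integers with $x^2+y^2=z^2$), so the triangle is a right triangle with hypotenuse $z$. *)

theory Defs
  imports "HOL-Analysis.Analysis"
begin

definition Cmat :: "real^3^3" where
  "Cmat = vector [vector [-1, 2, 2], vector [-2, 1, 2], vector [-2, 2, 3]]"

definition mat_pow :: "real^'n^'n \<Rightarrow> nat \<Rightarrow> real^'n^'n" where
  "mat_pow M n = ((\<lambda>A. M ** A) ^^ n) (mat 1)"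

text \<open>Circumradius of a triangle with side lengths a, b, c:
  R = abc / (4 * Area), with Area given by Heron's formula,
  i.e. 4 * Area = sqrt((a+b+c)(-a+b+c)(a-b+c)(a+b-c)).\<close>
definition circumradius :: "real \<Rightarrow> real \<Rightarrow> real \<Rightarrow> real" where
  "circumradius a b c =
     a * b * c / sqrt ((a + b + c) * (- a + b + c) * (a - b + c) * (a + b - c))"

end

theory Submission
  imports Defs
begin

lemma step:
  "Cmat *v (vector [a, b, c] :: real^3) = vector [-a + 2*b + 2*c, -2*a + b + 2*c, -2*a + 2*b + 3*c]"
  unfolding Cmat_def
  by (simp add: vec_eq_iff forall_3 matrix_vector_mult_def sum_3 vector_3)

lemma closed:
  "mat_pow Cmat n *v (vector [3, 4, 5] :: real^3) =
     vector [4 * real n ^ 2 + 8 * real n + 3, 4 * real n + 4, 4 * real n ^ 2 + 8 * real n + 5]"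
proof (induction n)
  case 0
  then show ?case by (simp add: mat_pow_def)
next
  case (Suc n)
  have "mat_pow Cmat (Suc n) = Cmat ** mat_pow Cmat n" by (simp add: mat_pow_def)
  then have "mat_pow Cmat (Suc n) *v (vector [3, 4, 5] :: real^3) = Cmat *v (mat_pow Cmat n *v vector [3, 4, 5])"
    by (simp add: matrix_vector_mul_assoc)
  also have "\<dots> = vector [4 * real (Suc n) ^ 2 + 8 * real (Suc n) + 3, 4 * real (Suc n) + 4, 4 * real (Suc n) ^ 2 + 8 * real (Suc n) + 5]"
    unfolding Suc step by (simp add: algebra_simps power2_eq_square)
  finally show ?case .
qed

lemma circ:
  fixes x y z :: real
  assumes "x > 0" "y > 0" "z > 0" "x^2 + y^2 = z^2"
  shows "circumradius x y z = z / 2"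
proof -
  have "(x + y + z) * (- x + y + z) * (x - y + z) * (x + y - z) = (2*x*y)^2"
  proof -
    have "(x + y + z) * (- x + y + z) * (x - y + z) * (x + y - z)
          = 2*x^2*y^2 + 2*z^2*(x^2+y^2) - x^4 - y^4 - (z^2)^2"
      by (simp add: algebra_simps power2_eq_square power4_eq_xxxx)
    also have "\<dots> = (2*x*y)^2" unfolding assms(4)[symmetric]
      by (simp add: algebra_simps power2_eq_square power4_eq_xxxx)
    finally show ?thesis .
  qed
  then have "sqrt ((x + y + z) * (- x + y + z) * (x - y + z) * (x + y - z)) = 2*x*y"
    using assms by simp
  then show ?thesis unfolding circumradius_def using assms by simp
qed

theorem mainTheorem9:
  fixes n :: nat
  assumes "n \<ge> 1"
  defines "v \<equiv> mat_pow Cmat n *v (vector [3, 4, 5] :: real^3)"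
  shows "circumradius (v $ 1) (v $ 2) (v $ 3) = 2 * real n ^ 2 + 4 * real n + 5 / 2"
proof -
  have v: "v $ 1 = 4 * real n ^ 2 + 8 * real n + 3" "v $ 2 = 4 * real n + 4"
          "v $ 3 = 4 * real n ^ 2 + 8 * real n + 5"
    unfolding v_def closed by (simp_all add: vector_3)
  have "circumradius (v $ 1) (v $ 2) (v $ 3) = v $ 3 / 2"
    by (rule circ) (simp_all add: v add_pos_nonneg algebra_simps power2_eq_square)
  then show ?thesis using v by simp
qed

end
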